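(* Let $Z$ be a separable real Banach space and $f:Z\to\mathbb{R}$ a continuous convex function. Then there exists a unique closed linear subspace $Y_f$ of $Z$ such that, for the quotient space $X_f:=Z/Y_f$ and the natural projection $\pi:Z\to X_f$, the function $f$ can be written as $$f(z)=c(\pi(z))+\ell(z)\quad\text{for all } z\in Z,$$ where $\ell\in Z^*$ and $c:X_f\to\mathbb{R}$ is a convex function which is essentially directionally coercive. Moreover, $$Y_f=\{v\in Z: f(z_0+tv)-f(z_0)-\langle \xi_0,tv\rangle=0 \text{ for all } t\in\mathbb{R}\},$$ where $z_0$ is any point of $Z$ and $\xi_0$ is any element of $\partial f(z_0)$.
   Context: For a continuous convex $f$ on a Banach space $Z$, $\partial f(x)=\{\xi\in Z^*: f(y)\ge f(x)+\langle\xi,y-x\rangle \text{ for all } y\in Z\}$. A function $g$ on a Banach space $X$ is directionally coercive if $\lim_{t\to\infty}g(x+tv)=\infty$ for all $x\in X$, $v\in X\setminus\{0\}$; it is essentially directionally coercive if there is $\ell\in X^*$ with $g-\ell$ directionally coercive. $Z/Y_f$ carries the quotient norm. *)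

theory Defs
  imports "HOL-Analysis.Analysis"
begin

definition subdiff :: "('a::real_normed_vector \<Rightarrow> real) \<Rightarrow> 'a \<Rightarrow> ('a \<Rightarrow> real) set" where
  "subdiff f x = {\<xi>. bounded_linear \<xi> \<and> (\<forall>y. f y \<ge> f x + \<xi> (y - x))}"

text \<open>Quotient space Z/Y realised as the set of cosets z + Y; natural projection.\<close>
definition quot_proj :: "'a::real_vector set \<Rightarrow> 'a \<Rightarrow> 'a set" where
  "quot_proj Y z = (\<lambda>y. z + y) ` Y"

text \<open>Quotient norm of the coset z + Y: inf over y in Y of norm (z + y), i.e. dist of z to Y.\<close>
definition quot_norm :: "'a::real_normed_vector set \<Rightarrow> 'a \<Rightarrow> real" where
  "quot_norm Y z = infdist z Y"

definition quot_convex :: "'a::real_vector set \<Rightarrow> ('a set \<Rightarrow> real) \<Rightarrow> bool" where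
  "quot_convex Y c \<longleftrightarrow> (\<forall>z w. \<forall>u\<in>{0..1::real}.
      c (quot_proj Y (u *\<^sub>R z + (1 - u) *\<^sub>R w))
        \<le> u * c (quot_proj Y z) + (1 - u) * c (quot_proj Y w))"

definition quot_dual :: "'a::real_normed_vector set \<Rightarrow> ('a set \<Rightarrow> real) \<Rightarrow> bool" where
  "quot_dual Y L \<longleftrightarrow> linear (\<lambda>z. L (quot_proj Y z))
      \<and> (\<exists>K. \<forall>z. \<bar>L (quot_proj Y z)\<bar> \<le> K * quot_norm Y z)"

definition quot_dir_coercive :: "'a::real_vector set \<Rightarrow> ('a set \<Rightarrow> real) \<Rightarrow> bool" where
  "quot_dir_coercive Y g \<longleftrightarrow> (\<forall>z w. quot_proj Y w \<noteq> quot_proj Y 0 \<longrightarrow>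
      filterlim (\<lambda>t::real. g (quot_proj Y (z + t *\<^sub>R w))) at_top at_top)"

definition quot_ess_dir_coercive :: "'a::real_normed_vector set \<Rightarrow> ('a set \<Rightarrow> real) \<Rightarrow> bool" where
  "quot_ess_dir_coercive Y c \<longleftrightarrow> (\<exists>L. quot_dual Y L \<and> quot_dir_coercive Y (\<lambda>x. c x - L x))"

definition decomposes :: "('a::real_normed_vector \<Rightarrow> real) \<Rightarrow> 'a set \<Rightarrow> bool" where
  "decomposes f Y \<longleftrightarrow> closed Y \<and> subspace Y \<and>
     (\<exists>l c. bounded_linear l \<and> quot_convex Y c \<and> quot_ess_dir_coercive Y c \<and>
        (\<forall>z. f z = c (quot_proj Y z) + l z))"

end

theory Submission
  imports Defs
begin


definition hbgood :: "('a::real_vector \<Rightarrow> real) \<Rightarrow> ('a \<times> real) set \<Rightarrow> bool" where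
 "hbgood q G \<longleftrightarrow> (\<forall>x a b. (x,a)\<in>G \<longrightarrow> (x,b)\<in>G \<longrightarrow> a=b) \<and> (0,0)\<in>G \<and>
   (\<forall>x a y b. (x,a)\<in>G \<longrightarrow> (y,b)\<in>G \<longrightarrow> (x+y,a+b)\<in>G) \<and>
   (\<forall>x a r. (x,a)\<in>G \<longrightarrow> (r *\<^sub>R x, r*a)\<in>G) \<and> (\<forall>x a. (x,a)\<in>G \<longrightarrow> a \<le> q x)"

lemma hbgoodD:
  assumes "hbgood q G"
  shows hb1: "\<And>x a b. (x,a)\<in>G \<Longrightarrow> (x,b)\<in>G \<Longrightarrow> a=b" and hb2: "(0,0)\<in>G"
   and hb3: "\<And>x a y b. (x,a)\<in>G \<Longrightarrow> (y,b)\<in>G \<Longrightarrow> (x+y,a+b)\<in>G"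
   and hb4: "\<And>x a r. (x,a)\<in>G \<Longrightarrow> (r *\<^sub>R x, r*a)\<in>G"
   and hb5: "\<And>x a. (x,a)\<in>G \<Longrightarrow> a \<le> q x"
  using assms unfolding hbgood_def by metis+

lemma hb_key:
  fixes q :: "'a::real_vector \<Rightarrow> real"
  assumes cv: "\<And>x y t. 0 \<le> t \<Longrightarrow> t \<le> 1 \<Longrightarrow> q ((1-t) *\<^sub>R x + t *\<^sub>R y) \<le> (1-t) * q x + t * q y"
    and g: "hbgood q G" and m1: "(m1,a1)\<in>G" and m2: "(m2,a2)\<in>G" and s: "s>0" and t: "t>0"
  shows "(a1 - q (m1 - s *\<^sub>R e))/s \<le> (q (m2 + t *\<^sub>R e) - a2)/t"
proof -
  define u where "u = s/(s+t)"
  have u: "0 \<le> u" "u \<le> 1" "1 - u = t/(s+t)" using s t by (auto simp: u_def field_simps)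
  have "((1-u) *\<^sub>R m1 + u *\<^sub>R m2, (1-u)*a1 + u*a2) \<in> G"
    by (rule hb3[OF g hb4[OF g m1] hb4[OF g m2]])
  hence A: "(1-u)*a1 + u*a2 \<le> q ((1-u) *\<^sub>R m1 + u *\<^sub>R m2)" by (rule hb5[OF g])
  have eqm: "(1-u) *\<^sub>R m1 + u *\<^sub>R m2 = (1-u) *\<^sub>R (m1 - s *\<^sub>R e) + u *\<^sub>R (m2 + t *\<^sub>R e)"
  proof -
    have h: "(1-u) * s = u * t" using u s t by (simp add: u_def field_simps)
    have "(1-u) *\<^sub>R (m1 - s *\<^sub>R e) + u *\<^sub>R (m2 + t *\<^sub>R e) = (1-u) *\<^sub>R m1 + u *\<^sub>R m2 + (u * t) *\<^sub>R e - ((1-u) * s) *\<^sub>R e"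
      by (simp add: algebra_simps)
    thus ?thesis using h by simp
  qed
  from A[unfolded eqm] cv[OF u(1,2), of "m1 - s *\<^sub>R e" "m2 + t *\<^sub>R e"]
  have B: "(1-u)*a1 + u*a2 \<le> (1-u) * q (m1 - s *\<^sub>R e) + u * q (m2 + t *\<^sub>R e)" by linarith
  hence B': "(t/(s+t))*a1 + (s/(s+t))*a2 \<le> (t/(s+t)) * q (m1 - s *\<^sub>R e) + (s/(s+t)) * q (m2 + t *\<^sub>R e)"
    unfolding u(3) unfolding u_def .
  have ineq: "(s+t) * ((t/(s+t))*a1 + (s/(s+t))*a2) \<le> (s+t) * ((t/(s+t)) * q (m1 - s *\<^sub>R e) + (s/(s+t)) * q (m2 + t *\<^sub>R e))"
    by (rule mult_left_mono[OF B']) (use s t in simp)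
  have c1: "(s+t)*(t/(s+t)) = t" and c2: "(s+t)*(s/(s+t)) = s" using s t by simp_all
  have e1: "(s+t) * ((t/(s+t))*a1 + (s/(s+t))*a2) = t*a1 + s*a2"
    by (simp only: distrib_left mult.assoc[symmetric] c1 c2)
  have e2: "(s+t) * ((t/(s+t)) * q (m1 - s *\<^sub>R e) + (s/(s+t)) * q (m2 + t *\<^sub>R e)) = t * q (m1 - s *\<^sub>R e) + s * q (m2 + t *\<^sub>R e)"
    by (simp only: distrib_left mult.assoc[symmetric] c1 c2)
  have "t*a1 + s*a2 \<le> t * q (m1 - s *\<^sub>R e) + s * q (m2 + t *\<^sub>R e)" using ineq unfolding e1 e2 .
  hence "t*(a1 - q (m1 - s *\<^sub>R e)) \<le> s * (q (m2 + t *\<^sub>R e) - a2)" by (simp add: algebra_simps)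
  thus ?thesis using s t by (simp add: field_simps)
qed

lemma hb_extend:
  fixes q :: "'a::real_vector \<Rightarrow> real"
  assumes cv: "\<And>x y t. 0 \<le> t \<Longrightarrow> t \<le> 1 \<Longrightarrow> q ((1-t) *\<^sub>R x + t *\<^sub>R y) \<le> (1-t) * q x + t * q y"
    and g: "hbgood q G" and e: "e \<notin> fst ` G"
  shows "\<exists>G'. hbgood q G' \<and> G \<subseteq> G' \<and> G' \<noteq> G"
proof -
  define S where "S = {(a - q (m - s *\<^sub>R e))/s | m a s. (m,a)\<in>G \<and> s>0}"
  define \<alpha> where "\<alpha> = Sup S"
  have g0: "(0,0) \<in> G" by (rule hb2[OF g])
  have Sin: "(a - q (m - s *\<^sub>R e))/s \<in> S" if "(m,a)\<in>G" "s>0" for m a s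
    unfolding S_def using that by auto
  have Sne: "S \<noteq> {}" using Sin[OF g0 zero_less_one] by blast
  have Sub: "y \<le> (q (m2 + t *\<^sub>R e) - a2)/t" if h2: "(m2,a2)\<in>G" and ht: "t>0" and yS: "y \<in> S" for m2 a2 t y
  proof -
    obtain m a s where "y = (a - q (m - s *\<^sub>R e))/s" "(m,a)\<in>G" "s>0" using yS unfolding S_def by blast
    thus ?thesis using hb_key[OF cv g _ h2 _ ht] by simp
  qed
  have bdd: "bdd_above S" by (rule bdd_aboveI, rule Sub[OF g0 zero_less_one])
  have dom: "a + t * \<alpha> \<le> q (m + t *\<^sub>R e)" if ma: "(m,a)\<in>G" for m a t
  proof (cases "t > 0")
    case True
    have "\<alpha> \<le> (q (m + t *\<^sub>R e) - a)/t" unfolding \<alpha>_def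
      by (rule cSup_least[OF Sne]) (rule Sub[OF ma True])
    thus ?thesis using True by (simp add: field_simps)
  next
    case False
    show ?thesis
    proof (cases "t = 0")
      case True thus ?thesis using hb5[OF g ma] by simp
    next
      case F2: False
      hence s: "-t > 0" using False by simp
      have "(a - q (m - (-t) *\<^sub>R e))/(-t) \<in> S" by (rule Sin[OF ma s])
      hence "(a - q (m - (-t) *\<^sub>R e))/(-t) \<le> \<alpha>" unfolding \<alpha>_def by (rule cSup_upper[OF _ bdd])
      hence "a - q (m + t *\<^sub>R e) \<le> (-t) * \<alpha>" using s by (simp add: field_simps)
      thus ?thesis by simp
    qed
  qed
  define G' where "G' = {(m + t *\<^sub>R e, a + t * \<alpha>) | m a t. (m,a)\<in>G}"
  have gs: "\<And>x a b. (x,a)\<in>G \<Longrightarrow> (x,b)\<in>G \<Longrightarrow> a=b"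
    and gadd: "\<And>x a y b. (x,a)\<in>G \<Longrightarrow> (y,b)\<in>G \<Longrightarrow> (x+y,a+b)\<in>G"
    and gsc: "\<And>x a r. (x,a)\<in>G \<Longrightarrow> (r *\<^sub>R x, r*a)\<in>G"
    using hbgoodD[OF g] by blast+
  have "hbgood q G'"
    unfolding hbgood_def
  proof (intro conjI allI impI)
    fix x a b assume "(x,a)\<in>G'" "(x,b)\<in>G'"
    then obtain m1 a1 t1 m2 a2 t2 where h: "(m1,a1)\<in>G" "(m2,a2)\<in>G" "x = m1 + t1 *\<^sub>R e" "a = a1 + t1*\<alpha>"
      "x = m2 + t2 *\<^sub>R e" "b = a2 + t2*\<alpha>" unfolding G'_def by blast
    have t12: "t1 = t2"
    proof (rule ccontr)
      assume ne: "t1 \<noteq> t2"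
      have "((-1) *\<^sub>R m1, (-1)*a1) \<in> G" by (rule gsc[OF h(1)])
      hence "(m2 + (-1) *\<^sub>R m1, a2 + (-1)*a1) \<in> G" by (rule gadd[OF h(2)])
      hence "((1/(t1-t2)) *\<^sub>R (m2 + (-1) *\<^sub>R m1), (1/(t1-t2)) * (a2 + (-1)*a1)) \<in> G" by (rule gsc)
      moreover have "(1/(t1-t2)) *\<^sub>R (m2 + (-1) *\<^sub>R m1) = e"
      proof -
        have "m2 - m1 = (t1 - t2) *\<^sub>R e" using h(3,5) by (simp add: algebra_simps)
        thus ?thesis using ne by simp
      qed
      ultimately have "e \<in> fst ` G" by force
      with e show False by simp
    qed
    hence "m1 = m2" using h by simp
    hence "a1 = a2" using gs h by blast
    thus "a = b" using h t12 by simp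
  next
    show "(0,0)\<in>G'" unfolding G'_def using g0 by force
  next
    fix x a y b assume "(x,a)\<in>G'" "(y,b)\<in>G'"
    then obtain m1 a1 t1 m2 a2 t2 where h: "(m1,a1)\<in>G" "(m2,a2)\<in>G" "x = m1 + t1 *\<^sub>R e" "a = a1 + t1*\<alpha>"
      "y = m2 + t2 *\<^sub>R e" "b = a2 + t2*\<alpha>" unfolding G'_def by blast
    have "(m1+m2, a1+a2) \<in> G" by (rule gadd[OF h(1,2)])
    moreover have "x + y = (m1+m2) + (t1+t2) *\<^sub>R e" "a + b = (a1+a2) + (t1+t2)*\<alpha>"
      using h by (simp_all add: algebra_simps)
    ultimately show "(x+y,a+b)\<in>G'" unfolding G'_def by blast
  next
    fix x a r assume "(x,a)\<in>G'"
    then obtain m1 a1 t1 where h: "(m1,a1)\<in>G" "x = m1 + t1 *\<^sub>R e" "a = a1 + t1*\<alpha>"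
      unfolding G'_def by blast
    have "(r *\<^sub>R m1, r*a1) \<in> G" by (rule gsc[OF h(1)])
    moreover have "r *\<^sub>R x = r *\<^sub>R m1 + (r*t1) *\<^sub>R e" "r * a = r*a1 + (r*t1)*\<alpha>"
      using h by (simp_all add: algebra_simps)
    ultimately show "(r *\<^sub>R x, r*a)\<in>G'" unfolding G'_def by blast
  next
    fix x a assume "(x,a)\<in>G'"
    then obtain m1 a1 t1 where h: "(m1,a1)\<in>G" "x = m1 + t1 *\<^sub>R e" "a = a1 + t1*\<alpha>"
      unfolding G'_def by blast
    show "a \<le> q x" using dom[OF h(1)] h by simp
  qed
  moreover have "G \<subseteq> G'"
  proof
    fix p assume "p \<in> G"
    then obtain m a where pm: "p = (m,a)" and mG: "(m,a)\<in>G" by (cases p) auto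
    have "(m + 0 *\<^sub>R e, a + 0 * \<alpha>) \<in> G'" unfolding G'_def using mG by blast
    thus "p \<in> G'" using pm by simp
  qed
  moreover have "G' \<noteq> G"
  proof -
    have "(0 + 1 *\<^sub>R e, 0 + 1 * \<alpha>) \<in> G'" unfolding G'_def using g0 by blast
    hence "(e, \<alpha>) \<in> G'" by simp
    moreover have "(e, \<alpha>) \<notin> G" using e by (metis fst_conv image_eqI)
    ultimately show ?thesis by blast
  qed
  ultimately show ?thesis by blast
qed

lemma hb_chain:
  assumes C: "C \<in> chains {G. hbgood q G}" and q0: "0 \<le> q 0"
  shows "hbgood q (insert (0,0) (\<Union>C))"
proof (cases "C = {}")
  case True thus ?thesis using q0 by (simp add: hbgood_def)
next
  case False
  have Cg: "\<And>G. G\<in>C \<Longrightarrow> hbgood q G" and ch: "\<And>A B. A\<in>C \<Longrightarrow> B\<in>C \<Longrightarrow> A \<subseteq> B \<or> B \<subseteq> A"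
    using C unfolding chains_def chain_subset_def by blast+
  have two: "\<exists>G\<in>C. p1 \<in> G \<and> p2 \<in> G" if pp: "p1 \<in> \<Union>C" "p2 \<in> \<Union>C" for p1 p2
  proof -
    obtain A B where "A\<in>C" "B\<in>C" "p1\<in>A" "p2\<in>B" using pp by blast
    thus ?thesis using ch[of A B] by blast
  qed
  obtain G0 where "G0 \<in> C" using False by blast
  hence z: "(0,0) \<in> \<Union>C" using hb2[OF Cg] by blast
  hence I: "insert (0,0) (\<Union>C) = \<Union>C" by blast
  show ?thesis unfolding I hbgood_def
  proof (intro conjI allI impI)
    fix x a b assume "(x,a)\<in>\<Union>C" "(x,b)\<in>\<Union>C"
    then obtain G where "G\<in>C" "(x,a)\<in>G" "(x,b)\<in>G" using two by blast
    thus "a = b" using hb1[OF Cg] by blast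
  next
    show "(0,0)\<in>\<Union>C" by (rule z)
  next
    fix x a y b assume "(x,a)\<in>\<Union>C" "(y,b)\<in>\<Union>C"
    then obtain G where "G\<in>C" "(x,a)\<in>G" "(y,b)\<in>G" using two by blast
    thus "(x+y,a+b)\<in>\<Union>C" using hb3[OF Cg] by blast
  next
    fix x a r assume "(x,a)\<in>\<Union>C"
    then obtain G where "G\<in>C" "(x,a)\<in>G" by blast
    thus "(r *\<^sub>R x, r*a)\<in>\<Union>C" using hb4[OF Cg] by blast
  next
    fix x a assume "(x,a)\<in>\<Union>C"
    then obtain G where "G\<in>C" "(x,a)\<in>G" by blast
    thus "a \<le> q x" using hb5[OF Cg] by blast
  qed
qed

lemma hahn_banach_convex:
  fixes q :: "'a::real_vector \<Rightarrow> real"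
  assumes cv: "\<And>x y t. 0 \<le> t \<Longrightarrow> t \<le> 1 \<Longrightarrow> q ((1-t) *\<^sub>R x + t *\<^sub>R y) \<le> (1-t) * q x + t * q y"
    and q0: "q 0 = 0"
  shows "\<exists>\<xi>. linear \<xi> \<and> (\<forall>x. \<xi> x \<le> q x)"
proof -
  have "\<forall>C\<in>chains {G. hbgood q G}. \<exists>U\<in>{G. hbgood q G}. \<forall>X\<in>C. X \<subseteq> U"
    using hb_chain q0 by fastforce
  from Zorn_Lemma2[OF this] obtain G where G: "hbgood q G"
    and mx: "\<And>X. hbgood q X \<Longrightarrow> G \<subseteq> X \<Longrightarrow> X = G" by blast
  have all: "\<exists>a. (x,a)\<in>G" for x
  proof (rule ccontr)
    assume "\<nexists>a. (x,a)\<in>G"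
    hence "x \<notin> fst ` G" by force
    from hb_extend[OF cv G this] mx show False by blast
  qed
  have gs: "\<And>x a b. (x,a)\<in>G \<Longrightarrow> (x,b)\<in>G \<Longrightarrow> a=b"
    and gadd: "\<And>x a y b. (x,a)\<in>G \<Longrightarrow> (y,b)\<in>G \<Longrightarrow> (x+y,a+b)\<in>G"
    and gsc: "\<And>x a r. (x,a)\<in>G \<Longrightarrow> (r *\<^sub>R x, r*a)\<in>G"
    and gd: "\<And>x a. (x,a)\<in>G \<Longrightarrow> a \<le> q x"
    using hbgoodD[OF G] by blast+
  define \<xi> where "\<xi> x = (THE a. (x,a)\<in>G)" for x
  have xi: "(x, \<xi> x) \<in> G" for x
    unfolding \<xi>_def using all[of x] gs by (metis theI)
  have xiu: "\<xi> x = a" if "(x,a)\<in>G" for x a using gs[OF that xi] by simp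
  have "linear \<xi>"
    by (rule linearI) (auto intro!: xiu gadd gsc xi)
  moreover have "\<forall>x. \<xi> x \<le> q x" using gd xi by blast
  ultimately show ?thesis by blast
qed



lemma subgrad_exists:
  fixes f :: "'a::real_normed_vector \<Rightarrow> real"
  assumes cont: "continuous_on UNIV f" and conv: "convex_on UNIV f"
  shows "\<exists>\<xi>. bounded_linear \<xi> \<and> (\<forall>y. f x + \<xi> (y - x) \<le> f y)"
proof -
  define q where "q v = f (x + v) - f x" for v
  have cv: "q ((1-t) *\<^sub>R a + t *\<^sub>R b) \<le> (1-t) * q a + t * q b" if "0 \<le> t" "t \<le> 1" for a b t
  proof -
    have "x + ((1-t) *\<^sub>R a + t *\<^sub>R b) = (1-t) *\<^sub>R (x + a) + t *\<^sub>R (x + b)" by (simp add: algebra_simps)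
    hence "f (x + ((1-t) *\<^sub>R a + t *\<^sub>R b)) \<le> (1-t) * f (x+a) + t * f (x+b)"
      using convex_onD[OF conv that] by simp
    moreover have "(1-t) * (f (x+a) - f x) + t * (f (x+b) - f x) = (1-t) * f (x+a) + t * f (x+b) - f x"
      by (simp add: algebra_simps)
    ultimately show ?thesis unfolding q_def by linarith
  qed
  have q0: "q 0 = 0" unfolding q_def by simp
  obtain \<xi> where lin: "linear \<xi>" and le: "\<And>v. \<xi> v \<le> q v"
    using hahn_banach_convex[of q, OF cv q0] by blast
  have "\<forall>e>0. \<exists>d>0. \<forall>x'\<in>UNIV. dist x' x < d \<longrightarrow> dist (f x') (f x) < e"
    using cont unfolding continuous_on_iff by blast
  hence "\<exists>d>0. \<forall>x'\<in>UNIV. dist x' x < d \<longrightarrow> dist (f x') (f x) < 1" by simp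
  then obtain d where d: "d>0" "\<And>y. dist y x < d \<Longrightarrow> dist (f y) (f x) < 1" by blast
  have qb: "q v < 1" if "norm v < d" for v
  proof -
    have "dist (x+v) x < d" using that by (simp add: dist_norm)
    hence "dist (f (x+v)) (f x) < 1" by (rule d(2))
    thus ?thesis unfolding q_def dist_real_def by simp
  qed
  have bd: "\<xi> v \<le> norm v * (2/d)" for v
  proof (cases "v = 0")
    case True thus ?thesis using linear_0[OF lin] by simp
  next
    case False
    hence nv: "norm v > 0" by simp
    define w where "w = (d / (2 * norm v)) *\<^sub>R v"
    have "norm w = d/2" unfolding w_def using nv d(1) by simp
    hence "q w < 1" using d(1) by (intro qb) simp
    hence "\<xi> w < 1" using le[of w] by simp
    moreover have "\<xi> w = (d / (2 * norm v)) * \<xi> v" unfolding w_def using linear_scale[OF lin] by simp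
    ultimately have "(d / (2 * norm v)) * \<xi> v < 1" by simp
    hence "d * \<xi> v < 2 * norm v" using nv d(1) by (simp add: field_simps)
    thus ?thesis using d(1) by (simp add: field_simps)
  qed
  have "bounded_linear \<xi>"
  proof (rule bounded_linear_intro[where K="2/d"])
    show "\<xi> (a + b) = \<xi> a + \<xi> b" for a b by (rule linear_add[OF lin])
    show "\<xi> (r *\<^sub>R a) = r *\<^sub>R \<xi> a" for r a using linear_scale[OF lin] by simp
    show "norm (\<xi> a) \<le> norm a * (2/d)" for a
      using bd[of a] bd[of "-a"] linear_neg[OF lin, of a] by (simp add: abs_le_iff)
  qed
  moreover have "\<forall>y. f x + \<xi> (y - x) \<le> f y"
  proof
    fix y
    have "\<xi> (y - x) \<le> f (x + (y - x)) - f x" using le[of "y - x"] unfolding q_def .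
    thus "f x + \<xi> (y - x) \<le> f y" by simp
  qed
  ultimately show ?thesis by blast
qed

lemma qp_eq:
  assumes "subspace Y" shows "quot_proj Y z = quot_proj Y w \<longleftrightarrow> z - w \<in> Y"
proof
  assume h: "quot_proj Y z = quot_proj Y w"
  have "z \<in> quot_proj Y z" unfolding quot_proj_def using subspace_0[OF assms] by force
  hence "z \<in> quot_proj Y w" using h by simp
  then obtain y where "y\<in>Y" "z = w + y" unfolding quot_proj_def by blast
  thus "z - w \<in> Y" by simp
next
  assume h: "z - w \<in> Y"
  show "quot_proj Y z = quot_proj Y w" unfolding quot_proj_def
  proof (intro equalityI subsetI)
    fix p assume "p \<in> (\<lambda>y. z+y) ` Y"
    then obtain y where y: "y\<in>Y" "p = z+y" by blast
    have "(z - w) + y \<in> Y" using subspace_add[OF assms h y(1)] .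
    moreover have "p = w + ((z - w) + y)" using y by simp
    ultimately show "p \<in> (\<lambda>y. w+y) ` Y" by blast
  next
    fix p assume "p \<in> (\<lambda>y. w+y) ` Y"
    then obtain y where y: "y\<in>Y" "p = w+y" by blast
    have "y - (z - w) \<in> Y" using subspace_diff[OF assms y(1) h] .
    moreover have "p = z + (y - (z - w))" using y by simp
    ultimately show "p \<in> (\<lambda>y. z+y) ` Y" by blast
  qed
qed

lemma lin_real_add_scale:
  assumes "linear (g :: 'a::real_vector \<Rightarrow> real)"
  shows "g (a + t *\<^sub>R b) = g a + t * g b"
  using linear_add[OF assms] linear_scale[OF assms] by simp

lemma decomp_char:
  fixes f :: "'a::real_normed_vector \<Rightarrow> real"
  assumes dec: "decomposes f Y" and xi: "\<xi> \<in> subdiff f z0"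
  shows "Y = {v. \<forall>t::real. f (z0 + t *\<^sub>R v) - f z0 - \<xi> (t *\<^sub>R v) = 0}"
proof -
  from dec obtain l c where sY: "subspace Y" and bl: "bounded_linear l"
    and ess: "quot_ess_dir_coercive Y c" and fz: "\<And>z. f z = c (quot_proj Y z) + l z"
    unfolding decomposes_def by blast
  from ess obtain L where qd: "quot_dual Y L" and co: "quot_dir_coercive Y (\<lambda>x. c x - L x)"
    unfolding quot_ess_dir_coercive_def by blast
  have linM: "linear (\<lambda>z. L (quot_proj Y z))" using qd unfolding quot_dual_def by blast
  have linl: "linear l" using bl by (rule bounded_linear.linear)
  have bx: "bounded_linear \<xi>" and sg: "\<And>y. f y \<ge> f z0 + \<xi> (y - z0)" using xi unfolding subdiff_def by auto
  have linx: "linear \<xi>" using bx by (rule bounded_linear.linear)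
  have xs: "\<xi> (t *\<^sub>R v) = t * \<xi> v" for t v using linear_scale[OF linx] by simp
  show ?thesis
  proof (intro equalityI subsetI)
    fix v assume v: "v \<in> Y"
    have aff: "f (z0 + t *\<^sub>R v) = f z0 + t * l v" for t
    proof -
      have "(z0 + t *\<^sub>R v) - z0 \<in> Y" using subspace_scale[OF sY v] by simp
      hence "quot_proj Y (z0 + t *\<^sub>R v) = quot_proj Y z0" using qp_eq[OF sY] by blast
      thus ?thesis using fz[of "z0 + t *\<^sub>R v"] fz[of z0] lin_real_add_scale[OF linl] by simp
    qed
    have "f z0 + t * \<xi> v \<le> f z0 + t * l v" for t
      using sg[of "z0 + t *\<^sub>R v"] aff[of t] xs by simp
    from this[of 1] this[of "-1"] have "l v = \<xi> v" by simp
    thus "v \<in> {v. \<forall>t::real. f (z0 + t *\<^sub>R v) - f z0 - \<xi> (t *\<^sub>R v) = 0}"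
      using aff xs by simp
  next
    fix v assume hv: "v \<in> {v. \<forall>t::real. f (z0 + t *\<^sub>R v) - f z0 - \<xi> (t *\<^sub>R v) = 0}"
    have P: "f (z0 + t *\<^sub>R v) = f z0 + t * \<xi> v" for t
    proof -
      have "f (z0 + t *\<^sub>R v) - f z0 - \<xi> (t *\<^sub>R v) = 0" using hv by simp
      thus ?thesis using xs[of t v] by linarith
    qed
    show "v \<in> Y"
    proof (rule ccontr)
      assume nv: "v \<notin> Y"
      have nv2: "- v \<notin> Y" using nv subspace_neg[OF sY, of "-v"] by auto
      have p1: "quot_proj Y v \<noteq> quot_proj Y 0" using nv qp_eq[OF sY] by simp
      have p2: "quot_proj Y (-v) \<noteq> quot_proj Y 0" using nv2 qp_eq[OF sY] by simp
      define K where "K = f z0 - l z0 - L (quot_proj Y z0)"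
      define B where "B = \<xi> v - l v - L (quot_proj Y v)"
      have eq: "c (quot_proj Y (z0 + t *\<^sub>R v)) - L (quot_proj Y (z0 + t *\<^sub>R v)) = K + t * B" for t
      proof -
        have "c (quot_proj Y (z0 + t *\<^sub>R v)) = f (z0 + t *\<^sub>R v) - l (z0 + t *\<^sub>R v)" using fz by simp
        moreover have "L (quot_proj Y (z0 + t *\<^sub>R v)) = L (quot_proj Y z0) + t * L (quot_proj Y v)"
          using lin_real_add_scale[OF linM] by simp
        ultimately show ?thesis using P[of t] lin_real_add_scale[OF linl]
          unfolding K_def B_def by (simp add: algebra_simps)
      qed
      have eq2: "c (quot_proj Y (z0 + t *\<^sub>R (-v))) - L (quot_proj Y (z0 + t *\<^sub>R (-v))) = K - t * B" for t
        using eq[of "-t"] by simp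
      have co': "filterlim (\<lambda>t. c (quot_proj Y (z + t *\<^sub>R w)) - L (quot_proj Y (z + t *\<^sub>R w))) at_top at_top"
        if "quot_proj Y w \<noteq> quot_proj Y 0" for z w
        using co that unfolding quot_dir_coercive_def by blast
      have l1: "filterlim (\<lambda>t::real. K + t * B) at_top at_top"
        using co'[OF p1, of z0] unfolding eq .
      have l2: "filterlim (\<lambda>t::real. K - t * B) at_top at_top"
        using co'[OF p2, of z0] unfolding eq2 .
      have "filterlim (\<lambda>t::real. (K + t * B) + (K - t * B)) at_top at_top"
        by (rule filterlim_at_top_add_at_top[OF l1 l2])
      hence "eventually (\<lambda>t::real. 2*K + 1 \<le> (K + t * B) + (K - t * B)) at_top"
        unfolding filterlim_at_top by blast
      thus False by simp
    qed
  qed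
qed

lemma conv_mono:
  fixes \<phi> :: "real \<Rightarrow> real"
  assumes cv: "\<And>x y u. 0 \<le> u \<Longrightarrow> u \<le> 1 \<Longrightarrow> \<phi> ((1-u)*x + u*y) \<le> (1-u)*\<phi> x + u*\<phi> y"
    and nl: "\<not> filterlim \<phi> at_top at_top" and t12: "t1 < t2"
  shows "\<phi> t2 \<le> \<phi> t1"
proof (rule ccontr)
  assume ne: "\<not> \<phi> t2 \<le> \<phi> t1"
  define k where "k = (\<phi> t2 - \<phi> t1)/(t2 - t1)"
  have k: "k > 0" unfolding k_def using t12 ne by simp
  have lb: "\<phi> t2 + k*(t - t2) \<le> \<phi> t" if tt: "t > t2" for t
  proof -
    define u where "u = (t2 - t1)/(t - t1)"
    have u: "0 \<le> u" "u \<le> 1" unfolding u_def using t12 tt by auto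
    have uu: "u * (t - t1) = t2 - t1" unfolding u_def using t12 tt by simp
    have "(1-u)*t1 + u*t = t1 + u*(t-t1)" by (simp add: algebra_simps)
    hence "(1-u)*t1 + u*t = t2" using uu by simp
    hence "\<phi> t2 \<le> (1-u)*\<phi> t1 + u*\<phi> t" using cv[OF u, of t1 t] by simp
    hence h: "\<phi> t2 - \<phi> t1 \<le> u*(\<phi> t - \<phi> t1)" by (simp add: algebra_simps)
    have "(\<phi> t2 - \<phi> t1)*(t-t1) \<le> u*(\<phi> t - \<phi> t1)*(t-t1)"
      using mult_right_mono[OF h, of "t - t1"] t12 tt by simp
    also have "\<dots> = (t2-t1)*(\<phi> t - \<phi> t1)" unfolding u_def using t12 tt by (simp add: field_simps)
    finally have h2: "(\<phi> t2 - \<phi> t1)*(t-t1) \<le> (t2-t1)*(\<phi> t - \<phi> t1)" .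
    have "k*(t - t1) = (\<phi> t2 - \<phi> t1)*(t-t1) / (t2 - t1)" unfolding k_def by simp
    also have "\<dots> \<le> \<phi> t - \<phi> t1" using h2 t12 by (simp add: divide_le_eq mult.commute)
    finally have h3: "k*(t - t1) \<le> \<phi> t - \<phi> t1" .
    have h4: "k * (t2 - t1) = \<phi> t2 - \<phi> t1" unfolding k_def using t12 by simp
    have "k*(t-t2) = k*(t-t1) - k*(t2-t1)" by (simp add: algebra_simps)
    thus ?thesis using h3 h4 by linarith
  qed
  have "filterlim \<phi> at_top at_top"
    unfolding filterlim_at_top
  proof
    fix Z
    show "eventually (\<lambda>t. Z \<le> \<phi> t) at_top"
      using eventually_gt_at_top[of "max t2 (t2 + (Z - \<phi> t2)/k)"]
    proof eventually_elim
      case (elim t)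
      hence tt: "t > t2" and "t - t2 > (Z - \<phi> t2)/k" by auto
      hence "k*(t - t2) > Z - \<phi> t2" using k by (simp add: field_simps)
      thus ?case using lb[OF tt] by simp
    qed
  qed
  with nl show False by simp
qed

lemma decomp_exists:
  fixes f :: "'a::real_normed_vector \<Rightarrow> real"
  assumes separable: "\<exists>D::'a set. countable D \<and> closure D = UNIV"
    and cont: "continuous_on UNIV f" and conv: "convex_on UNIV f"
  shows "\<exists>Y. decomposes f Y"
proof -
  obtain \<xi>0 where b0: "bounded_linear \<xi>0" and s0: "\<forall>y. f 0 + \<xi>0 (y - 0) \<le> f y"
    using subgrad_exists[OF cont conv, of 0] by blast
  have s0': "f 0 + \<xi>0 y \<le> f y" for y using s0 by simp
  have l0: "linear \<xi>0" using b0 by (rule bounded_linear.linear)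
  obtain D :: "'a set" where cD: "countable D" and dD: "closure D = UNIV" using separable by blast
  have Dne: "D \<noteq> {}" using dD by auto
  define d where "d = from_nat_into D"
  have rd: "range d = D" unfolding d_def using Dne cD by simp
  have "\<forall>n. \<exists>\<eta>. bounded_linear \<eta> \<and> (\<forall>y. f (d n) + \<eta> (y - d n) \<le> f y)"
    using subgrad_exists[OF cont conv] by blast
  hence "\<exists>\<eta>. \<forall>n. bounded_linear (\<eta> n) \<and> (\<forall>y. f (d n) + \<eta> n (y - d n) \<le> f y)" by (rule choice)
  then obtain \<eta> where b\<eta>: "\<And>n. bounded_linear (\<eta> n)" and s\<eta>: "\<And>n y. f (d n) + \<eta> n (y - d n) \<le> f y"
    by blast
  have l\<eta>: "linear (\<eta> n)" for n using b\<eta> by (rule bounded_linear.linear)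
  have "\<forall>n. \<exists>K>0. \<forall>x. norm (\<eta> n x) \<le> norm x * K"
    using b\<eta> bounded_linear.pos_bounded by blast
  hence "\<exists>K. \<forall>n. K n > 0 \<and> (\<forall>x. norm (\<eta> n x) \<le> norm x * K n)" by (rule choice)
  then obtain K where Kp: "\<And>n. K n > 0" and Kb0: "\<And>n x. norm (\<eta> n x) \<le> norm x * K n"
    by blast
  have Kb: "\<bar>\<eta> n x\<bar> \<le> norm x * K n" for n x using Kb0[of n x] by simp
  define a where "a n = (1/2::real)^n / (1 + K n)" for n
  have ap: "a n > 0" for n unfolding a_def using Kp[of n] by simp
  have ale: "a n \<le> (1/2)^n" for n
  proof -
    have "(1/2::real)^n / (1 + K n) \<le> (1/2)^n / 1" by (rule divide_left_mono) (use Kp[of n] in auto)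
    thus ?thesis unfolding a_def by simp
  qed
  have sg: "summable (\<lambda>n. (1/2::real)^n)" by (rule summable_geometric) simp
  have sg2: "(\<Sum>n. (1/2::real)^n) = 2" using suminf_geometric[of "1/2::real"] by simp
  have sa: "summable a" by (rule summable_comparison_test'[OF sg]) (use ap ale in \<open>auto simp: abs_of_pos\<close>)
  define A where "A = suminf a"
  have Ap: "A > 0" unfolding A_def by (rule suminf_pos[OF sa ap])
  define b where "b n = a n / A" for n
  have bp: "b n > 0" for n unfolding b_def using ap Ap by simp
  have sb: "summable b" unfolding b_def by (rule summable_divide[OF sa])
  have b1: "suminf b = 1" unfolding b_def using suminf_divide[OF sa, of A] Ap A_def by simp
  have bb: "\<bar>b n * \<eta> n x\<bar> \<le> (1/2)^n * (norm x / A)" for n x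
  proof -
    have "\<bar>b n * \<eta> n x\<bar> = b n * \<bar>\<eta> n x\<bar>" using bp[of n] by (simp add: abs_mult)
    also have "\<dots> \<le> b n * (norm x * K n)" by (rule mult_left_mono[OF Kb]) (use bp[of n] in simp)
    also have "\<dots> = (1/2)^n * (norm x / A) * (K n / (1 + K n))"
      unfolding b_def a_def using Kp[of n] Ap by (simp add: field_simps)
    also have "\<dots> \<le> (1/2)^n * (norm x / A)"
      by (rule mult_left_le) (use Kp[of n] Ap in auto)
    finally show ?thesis .
  qed
  have sbx: "summable (\<lambda>n. b n * \<eta> n x)" for x
    by (rule summable_comparison_test'[OF summable_mult2[OF sg, of "norm x / A"]]) (metis bb real_norm_def)
  have sbxa: "summable (\<lambda>n. \<bar>b n * \<eta> n x\<bar>)" for x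
    by (rule summable_comparison_test'[OF summable_mult2[OF sg, of "norm x / A"]]) (metis bb abs_abs real_norm_def)
  define L0 where "L0 x = (\<Sum>n. b n * \<eta> n x)" for x
  have L0add: "L0 (x + y) = L0 x + L0 y" for x y
  proof -
    have "L0 x + L0 y = (\<Sum>n. b n * \<eta> n x + b n * \<eta> n y)" unfolding L0_def by (rule suminf_add[OF sbx sbx])
    thus ?thesis unfolding L0_def using linear_add[OF l\<eta>] by (simp add: algebra_simps)
  qed
  have L0sc: "L0 (r *\<^sub>R x) = r * L0 x" for r x
  proof -
    have "r * L0 x = (\<Sum>n. r * (b n * \<eta> n x))" unfolding L0_def by (rule suminf_mult[OF sbx, symmetric])
    thus ?thesis unfolding L0_def using linear_scale[OF l\<eta>] by (simp add: algebra_simps)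
  qed
  have L0bd: "\<bar>L0 x\<bar> \<le> norm x * (2/A)" for x
  proof -
    have "\<bar>L0 x\<bar> \<le> (\<Sum>n. \<bar>b n * \<eta> n x\<bar>)" unfolding L0_def by (rule summable_rabs[OF sbxa])
    also have "\<dots> \<le> (\<Sum>n. (1/2)^n * (norm x / A))" by (rule suminf_le[OF bb sbxa summable_mult2[OF sg]])
    also have "\<dots> = (\<Sum>n. (1/2::real)^n) * (norm x / A)" by (rule suminf_mult2[OF sg, symmetric])
    also have "\<dots> = norm x * (2/A)" unfolding sg2 by simp
    finally show ?thesis .
  qed
  have bL0: "bounded_linear L0"
    by (rule bounded_linear_intro[where K="2/A"]) (use L0add L0sc L0bd in auto)
  have linL0: "linear L0" using bL0 by (rule bounded_linear.linear)
  define Y where "Y = {v. \<forall>x t. f (x + t *\<^sub>R v) = f x + t * \<xi>0 v}"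
  have Yi: "f (x + t *\<^sub>R v) = f x + t * \<xi>0 v" if "v \<in> Y" for x t v using that unfolding Y_def by blast
  have Y1: "f (x + y) = f x + \<xi>0 y" if "y \<in> Y" for x y using Yi[OF that, of x 1] by simp
  have sY: "subspace Y"
  proof (rule subspaceI)
    show "0 \<in> Y" unfolding Y_def using linear_0[OF l0] by simp
  next
    fix u v assume u: "u \<in> Y" and v: "v \<in> Y"
    show "u + v \<in> Y" unfolding Y_def
    proof (intro CollectI allI)
      fix x t
      have "f (x + t *\<^sub>R (u + v)) = f ((x + t *\<^sub>R u) + t *\<^sub>R v)" by (simp add: algebra_simps)
      also have "\<dots> = f x + t * \<xi>0 u + t * \<xi>0 v" using Yi[OF v] Yi[OF u] by simp
      finally show "f (x + t *\<^sub>R (u + v)) = f x + t * \<xi>0 (u + v)"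
        using linear_add[OF l0] by (simp add: algebra_simps)
    qed
  next
    fix c and v assume v: "v \<in> Y"
    show "c *\<^sub>R v \<in> Y" unfolding Y_def
    proof (intro CollectI allI)
      fix x t
      have "f (x + t *\<^sub>R (c *\<^sub>R v)) = f x + (t*c) * \<xi>0 v" using Yi[OF v, of x "t*c"] by simp
      thus "f (x + t *\<^sub>R (c *\<^sub>R v)) = f x + t * \<xi>0 (c *\<^sub>R v)" using linear_scale[OF l0] by simp
    qed
  qed
  have cx: "continuous_on UNIV \<xi>0" by (rule linear_continuous_on[OF b0])
  have cY: "closed Y" unfolding Y_def
  proof (intro closed_Collect_all closed_Collect_eq)
    fix x :: 'a and t :: real
    show "continuous_on UNIV (\<lambda>v. f (x + t *\<^sub>R v))"
      by (rule continuous_on_compose2[OF cont]) (auto intro!: continuous_intros)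
    show "continuous_on UNIV (\<lambda>v. f x + t * \<xi>0 v)" by (intro continuous_intros cx)
  qed
  define rep where "rep S = (SOME z. S = quot_proj Y z)" for S
  have rep: "rep (quot_proj Y z) - z \<in> Y" for z
  proof -
    have "quot_proj Y z = quot_proj Y (rep (quot_proj Y z))" unfolding rep_def by (rule someI[of _ z]) simp
    thus ?thesis using qp_eq[OF sY] by metis
  qed
  have inv: "h (rep (quot_proj Y z)) = h z" if hh: "\<And>x y. y \<in> Y \<Longrightarrow> h (x + y) = h x"
    for h :: "'a \<Rightarrow> real" and z
    using hh[OF rep[of z], of z] by simp
  have etaY: "\<eta> n y = \<xi>0 y" if y: "y \<in> Y" for n y
  proof -
    have "t * \<eta> n y \<le> t * \<xi>0 y" for t
    proof -
      have "f (d n) + \<eta> n ((d n + t *\<^sub>R y) - d n) \<le> f (d n + t *\<^sub>R y)" by (rule s\<eta>)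
      thus ?thesis using Yi[OF y, of "d n" t] linear_scale[OF l\<eta>] by simp
    qed
    from this[of 1] this[of "-1"] show ?thesis by simp
  qed
  have L0Y: "L0 y = \<xi>0 y" if y: "y \<in> Y" for y
    unfolding L0_def using etaY[OF y] suminf_mult2[OF sb, of "\<xi>0 y"] b1 by simp
  define c where "c S = f (rep S) - \<xi>0 (rep S)" for S
  define L where "L S = L0 (rep S) - \<xi>0 (rep S)" for S
  have cz: "c (quot_proj Y z) = f z - \<xi>0 z" for z
    unfolding c_def by (rule inv) (simp add: Y1 linear_add[OF l0])
  have Lz: "L (quot_proj Y z) = L0 z - \<xi>0 z" for z
    unfolding L_def by (rule inv) (simp add: L0add linear_add[OF l0] L0Y)
  have qc: "quot_convex Y c" unfolding quot_convex_def
  proof (intro allI ballI)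
    fix z w and u :: real assume "u \<in> {0..1}"
    hence u: "0 \<le> u" "u \<le> 1" by auto
    have h1: "f (u *\<^sub>R z + (1-u) *\<^sub>R w) \<le> u * f z + (1-u) * f w"
      using convex_onD[OF conv, of "1-u" z w] u by simp
    have h2: "\<xi>0 (u *\<^sub>R z + (1-u) *\<^sub>R w) = u * \<xi>0 z + (1-u) * \<xi>0 w"
      using linear_add[OF l0] linear_scale[OF l0] by simp
    have e: "u * (f z - \<xi>0 z) + (1-u)*(f w - \<xi>0 w) = (u * f z + (1-u) * f w) - (u * \<xi>0 z + (1-u)* \<xi>0 w)"
      by (simp add: algebra_simps)
    show "c (quot_proj Y (u *\<^sub>R z + (1 - u) *\<^sub>R w)) \<le> u * c (quot_proj Y z) + (1 - u) * c (quot_proj Y w)"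
      unfolding cz e using h1 h2 by linarith
  qed
  have Yne: "Y \<noteq> {}" using subspace_0[OF sY] by blast
  have qd: "quot_dual Y L"
  proof -
    have linM: "linear (\<lambda>z. L (quot_proj Y z))" unfolding Lz
      by (rule linearI) (simp_all add: L0add L0sc linear_add[OF l0] linear_scale[OF l0] algebra_simps)
    have bM: "bounded_linear (\<lambda>z. L0 z - \<xi>0 z)" by (rule bounded_linear_sub[OF bL0 b0])
    then obtain KM where KM: "KM > 0" "\<And>x. norm (L0 x - \<xi>0 x) \<le> norm x * KM"
      using bounded_linear.pos_bounded by blast
    have "\<bar>L (quot_proj Y z)\<bar> \<le> KM * quot_norm Y z" for z
    proof -
      have "\<bar>L0 z - \<xi>0 z\<bar> / KM \<le> infdist z Y"
        unfolding infdist_notempty[OF Yne]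
      proof (rule cINF_greatest[OF Yne])
        fix y assume y: "y \<in> Y"
        have "L0 z - \<xi>0 z = L0 (z - y) - \<xi>0 (z - y)"
          using L0Y[OF y] linear_diff[OF linL0] linear_diff[OF l0] by simp
        hence "\<bar>L0 z - \<xi>0 z\<bar> \<le> dist z y * KM" using KM(2)[of "z - y"] by (simp add: dist_norm)
        thus "\<bar>L0 z - \<xi>0 z\<bar> / KM \<le> dist z y" using KM(1) by (simp add: divide_le_eq)
      qed
      thus ?thesis unfolding quot_norm_def Lz using KM(1) by (simp add: divide_le_eq mult.commute)
    qed
    thus ?thesis unfolding quot_dual_def using linM by blast
  qed
  have co: "quot_dir_coercive Y (\<lambda>x. c x - L x)"
    unfolding quot_dir_coercive_def
  proof (intro allI impI)
    fix z w assume "quot_proj Y w \<noteq> quot_proj Y 0"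
    hence wY: "w \<notin> Y" using qp_eq[OF sY] by simp
    define \<phi> where "\<phi> t = f (z + t *\<^sub>R w) - L0 (z + t *\<^sub>R w)" for t
    have eqf: "(\<lambda>t. c (quot_proj Y (z + t *\<^sub>R w)) - L (quot_proj Y (z + t *\<^sub>R w))) = \<phi>"
      by (rule ext) (simp add: cz Lz \<phi>_def)
    show "filterlim (\<lambda>t. c (quot_proj Y (z + t *\<^sub>R w)) - L (quot_proj Y (z + t *\<^sub>R w))) at_top at_top"
      unfolding eqf
    proof (rule ccontr)
      assume nl: "\<not> filterlim \<phi> at_top at_top"
      have cvphi: "\<phi> ((1-u)*x + u*y) \<le> (1-u)*\<phi> x + u*\<phi> y" if uu: "0 \<le> u" "u \<le> 1" for x y u
      proof -
        have e: "z + ((1-u)*x + u*y) *\<^sub>R w = (1-u) *\<^sub>R (z + x *\<^sub>R w) + u *\<^sub>R (z + y *\<^sub>R w)"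
          by (simp add: algebra_simps)
        have h1: "f (z + ((1-u)*x + u*y) *\<^sub>R w) \<le> (1-u) * f (z + x *\<^sub>R w) + u * f (z + y *\<^sub>R w)"
          unfolding e by (rule convex_onD[OF conv uu]) auto
        have h2: "L0 (z + ((1-u)*x + u*y) *\<^sub>R w) = (1-u) * L0 (z + x *\<^sub>R w) + u * L0 (z + y *\<^sub>R w)"
          unfolding e by (simp add: L0add L0sc)
        have e2: "(1-u)*\<phi> x + u*\<phi> y = ((1-u) * f (z + x *\<^sub>R w) + u * f (z + y *\<^sub>R w))
            - ((1-u) * L0 (z + x *\<^sub>R w) + u * L0 (z + y *\<^sub>R w))"
          unfolding \<phi>_def by (simp add: algebra_simps)
        show ?thesis unfolding e2 using h1 h2 unfolding \<phi>_def by linarith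
      qed
      have mono: "\<phi> t \<le> \<phi> 0" if "t \<ge> 0" for t
        using conv_mono[OF cvphi nl, of 0 t] that by (cases "t = 0") auto
      define s where "s = L0 w"
      have up: "f (z + t *\<^sub>R w) \<le> f z + t * s" if "t \<ge> 0" for t
        using mono[OF that] unfolding \<phi>_def s_def by (simp add: L0add L0sc)
      have etas: "\<eta> n w \<le> s" for n
      proof (rule ccontr)
        assume "\<not> \<eta> n w \<le> s"
        hence g: "\<eta> n w - s > 0" by simp
        define C where "C = f z - f (d n) - \<eta> n (z - d n)"
        have tb: "t * (\<eta> n w - s) \<le> C" if "t \<ge> 0" for t
        proof -
          have h1: "f (d n) + \<eta> n ((z + t *\<^sub>R w) - d n) \<le> f (z + t *\<^sub>R w)" by (rule s\<eta>)
          have h2: "\<eta> n ((z + t *\<^sub>R w) - d n) = \<eta> n (z - d n) + t * \<eta> n w"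
          proof -
            have ee: "(z + t *\<^sub>R w) - d n = (z - d n) + t *\<^sub>R w" by (simp add: algebra_simps)
            show ?thesis unfolding ee by (rule lin_real_add_scale[OF l\<eta>])
          qed
          have "t * (\<eta> n w - s) = t * \<eta> n w - t * s" by (simp add: algebra_simps)
          thus ?thesis using h1 h2 up[OF that] unfolding C_def by linarith
        qed
        have "(\<bar>C\<bar> + 1) / (\<eta> n w - s) * (\<eta> n w - s) \<le> C" by (rule tb) (use g in simp)
        hence "\<bar>C\<bar> + 1 \<le> C" using g by simp
        thus False using abs_ge_self[of C] by linarith
      qed
      have allEq: "\<eta> n w = s" for n
      proof -
        have sm: "summable (\<lambda>n. b n * (s - \<eta> n w))"
        proof -
          have "summable (\<lambda>n. b n * s - b n * \<eta> n w)" by (rule summable_diff[OF summable_mult2[OF sb] sbx])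
          thus ?thesis by (simp add: algebra_simps)
        qed
        have nn: "0 \<le> b n * (s - \<eta> n w)" for n using bp[of n] etas[of n] by simp
        have "(\<Sum>n. b n * (s - \<eta> n w)) = (\<Sum>n. b n * s) - (\<Sum>n. b n * \<eta> n w)"
          using suminf_diff[OF summable_mult2[OF sb] sbx, of s w] by (simp add: algebra_simps)
        also have "\<dots> = 0" using suminf_mult2[OF sb, of s] b1 unfolding s_def L0_def by simp
        finally have "\<forall>n. b n * (s - \<eta> n w) = 0" using suminf_eq_zero_iff[OF sm nn] by simp
        hence "b n * (s - \<eta> n w) = 0" by blast
        thus ?thesis using bp[of n] by simp
      qed
      have geq: "f x + t * s \<le> f (x + t *\<^sub>R w)" for x t
      proof -
        have c1: "continuous_on UNIV (\<lambda>x. f x + t * s)" by (intro continuous_intros cont)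
        have c2: "continuous_on UNIV (\<lambda>x. f (x + t *\<^sub>R w))"
          by (rule continuous_on_compose2[OF cont]) (auto intro!: continuous_intros)
        have cl: "closed {x. f x + t * s \<le> f (x + t *\<^sub>R w)}" by (rule closed_Collect_le[OF c1 c2])
        have "D \<subseteq> {x. f x + t * s \<le> f (x + t *\<^sub>R w)}"
        proof
          fix y assume "y \<in> D"
          then obtain n where y: "y = d n" using rd by blast
          have "f (d n) + \<eta> n ((d n + t *\<^sub>R w) - d n) \<le> f (d n + t *\<^sub>R w)" by (rule s\<eta>)
          moreover have "\<eta> n ((d n + t *\<^sub>R w) - d n) = t * s" using linear_scale[OF l\<eta>] allEq by simp
          ultimately show "y \<in> {x. f x + t * s \<le> f (x + t *\<^sub>R w)}" using y by simp
        qed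
        hence "closure D \<subseteq> {x. f x + t * s \<le> f (x + t *\<^sub>R w)}" by (rule closure_minimal[OF _ cl])
        thus ?thesis using dD by auto
      qed
      have feq: "f (x + t *\<^sub>R w) = f x + t * s" for x t
      proof -
        have "f (x + t *\<^sub>R w) + (-t) * s \<le> f ((x + t *\<^sub>R w) + (-t) *\<^sub>R w)" by (rule geq)
        hence "f (x + t *\<^sub>R w) - t * s \<le> f x" by simp
        with geq[of x t] show ?thesis by simp
      qed
      have "s = \<xi>0 w"
      proof -
        have "t * \<xi>0 w \<le> t * s" for t
          using s0'[of "t *\<^sub>R w"] feq[of 0 t] linear_scale[OF l0] by simp
        from this[of 1] this[of "-1"] show ?thesis by simp
      qed
      hence "w \<in> Y" unfolding Y_def using feq by simp
      with wY show False by simp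
    qed
  qed
  have fz': "\<forall>z. f z = c (quot_proj Y z) + \<xi>0 z" using cz by simp
  have ess: "quot_ess_dir_coercive Y c" unfolding quot_ess_dir_coercive_def using qd co by blast
  show ?thesis unfolding decomposes_def using cY sY b0 qc ess fz' by blast
qed

theorem mainTheorem3:
  fixes f :: "'a::banach \<Rightarrow> real"
  assumes separable: "\<exists>D::'a set. countable D \<and> closure D = UNIV"
    and cont: "continuous_on UNIV f"
    and conv: "convex_on UNIV f"
  shows "(\<exists>!Y. decomposes f Y) \<and>
    (\<forall>Y. decomposes f Y \<longrightarrow> (\<forall>z0. \<forall>\<xi>0\<in>subdiff f z0.
        Y = {v. \<forall>t::real. f (z0 + t *\<^sub>R v) - f z0 - \<xi>0 (t *\<^sub>R v) = 0}))"
proof -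
  obtain Y where dY: "decomposes f Y" using decomp_exists[OF separable cont conv] by blast
  obtain \<xi>0 where "bounded_linear \<xi>0" "\<forall>y. f 0 + \<xi>0 (y - 0) \<le> f y"
    using subgrad_exists[OF cont conv, of 0] by blast
  hence x0: "\<xi>0 \<in> subdiff f 0" unfolding subdiff_def by auto
  have uniq: "Y' = Y" if "decomposes f Y'" for Y'
    using decomp_char[OF that x0] decomp_char[OF dY x0] by simp
  show ?thesis
  proof
    show "\<exists>!Y. decomposes f Y" using dY uniq by blast
    show "\<forall>Y. decomposes f Y \<longrightarrow> (\<forall>z0. \<forall>\<xi>0\<in>subdiff f z0.
        Y = {v. \<forall>t::real. f (z0 + t *\<^sub>R v) - f z0 - \<xi>0 (t *\<^sub>R v) = 0})"
      using decomp_char by blast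
  qed
qed

end
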